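(* Let $(\Omega,\mathscr F,(\mathscr F_t)_{t\ge0},\mathbb P)$ be a complete filtered probability space satisfying the usual conditions with $\mathscr F_0$ trivial, let $S$ be a pricing kernel and $G$ a positive semimartingale with $G_0=1$ such that $SG$ is also a pricing kernel (as in the context). Suppose that both $K=S$ and $K=SG$ satisfy: (a) for each $t>0$, $\mathbb E^{\mathbb P}_t[K_T]/\mathbb E^{\mathbb P}[K_T]$ converges in $L^1(\mathbb P)$ as $T\to\infty$ to an almost surely positive $\mathscr F_t$-measurable random variable; (b) for each $t>0$, $\mathbb E^{\mathbb P}[K_{T-t}]/\mathbb E^{\mathbb P}[K_T]$ has a positive finite limit as $T\to\infty$. Let $\lambda,\pi,B^\infty,\mathbb L$ and $\pi^G,\mathbb G$ be as in the context. Suppose further that for some $t\ge0$ there are constants $0<c<C<\infty$ and $T'>0$ such that almost surely $c<\frac{\mathbb E^{\mathbb G}_t[\pi_T/\pi_T^G]}{\mathbb E^{\mathbb G}_t[1/\pi_T^G]}<C$ for all $T>T'$. Then $\lim_{T\to\infty}\rho^{\mathbb L}_{t,T}(G_T)=\lambda$, in probability under any measure locally equivalent to $\mathbb P$.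
   Context: A pricing kernel is a strictly positive semimartingale $K$ with $K_0=1$, strictly positive left-limit process $K_-$, and $\mathbb E^{\mathbb P}[K_T/K_t]<\infty$ for $T>t\ge0$. $\mathbb E_t$ is conditional expectation given $\mathscr F_t$. For a kernel $K$ satisfying (a),(b), write $P_t^{K,T}:=\mathbb E^{\mathbb P}_t[K_T/K_t]$, let $M_t^{K}$ be the $L^1$-limit in (a) (with $M_0^K=1$; it is a positive martingale), let $\lambda^K$ be the constant with $\lim_{T\to\infty}\mathbb E^{\mathbb P}[K_{T-t}]/\mathbb E^{\mathbb P}[K_T]=e^{\lambda^K t}$, and let $\pi^K_t$ be the positive limit in the semimartingale topology of $P_t^{K,T}/P_0^{K,T-t}$ as $T\to\infty$; then $K_t=e^{-\lambda^K t}M^K_t/\pi^K_t$. For $K=S$ write $\lambda,\pi,M^\infty$, put $B_t^\infty:=e^{\lambda t}\pi_t$ (the long bond) and define $\mathbb L$ by $\mathbb L|_{\mathscr F_t}=M_t^\infty\,\mathbb P|_{\mathscr F_t}$. For $K=SG$ write $\lambda^G,\pi^G,M^{G,\infty}$ and define the long forward growth measure $\mathbb G$ by $\mathbb G|_{\mathscr F_t}=M_t^{G,\infty}\,\mathbb P|_{\mathscr F_t}$. The exponential yield on $G$ under $\mathbb L$ is $\rho^{\mathbb L}_{t,T}(G_T):=\frac{1}{T-t}\log\Big(\frac{\mathbb E^{\mathbb L}_t[G_T]}{\mathbb E^{\mathbb L}_t[G_TB_t^\infty/B_T^\infty]}\Big)$. Locally equivalent means equivalent on each $\mathscr F_t$.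 *)

theory Defs
  imports "HOL-Probability.Probability"
begin

definition usual_filtered_space :: "'a measure \<Rightarrow> (real \<Rightarrow> 'a measure) \<Rightarrow> bool" where
  "usual_filtered_space P F \<longleftrightarrow>
     prob_space P \<and>
     (\<forall>t\<ge>0. subalgebra P (F t)) \<and>
     (\<forall>s t. 0 \<le> s \<longrightarrow> s \<le> t \<longrightarrow> sets (F s) \<subseteq> sets (F t)) \<and>
     (\<forall>N \<in> null_sets P. \<forall>A. A \<subseteq> N \<longrightarrow> A \<in> sets P) \<and>
     null_sets P \<subseteq> sets (F 0) \<and>
     (\<forall>t\<ge>0. sets (F t) = (\<Inter>s\<in>{t<..}. sets (F s))) \<and>
     (\<forall>A \<in> sets (F 0). measure P A = 0 \<or> measure P A = 1)"

definition adapted :: "(real \<Rightarrow> 'a measure) \<Rightarrow> (real \<Rightarrow> 'a \<Rightarrow> real) \<Rightarrow> bool" where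
  "adapted F X \<longleftrightarrow> (\<forall>t\<ge>0. X t \<in> borel_measurable (F t))"

definition cadlag :: "(real \<Rightarrow> real) \<Rightarrow> bool" where
  "cadlag f \<longleftrightarrow> (\<forall>t\<ge>0. (f \<longlongrightarrow> f t) (at_right t) \<and> (0 < t \<longrightarrow> (\<exists>l. (f \<longlongrightarrow> l) (at_left t))))"

text \<open>Elementary (simple) predictable integrands bounded by 1:
  H = h0 1_{0} + sum_{i<n} h_i 1_{(s_i, s_{i+1}]}, h_i F_{s_i}-measurable, |h_i| <= 1.\<close>
definition simple_pred :: "(real \<Rightarrow> 'a measure) \<Rightarrow> ('a \<Rightarrow> real) \<Rightarrow> nat \<Rightarrow> (nat \<Rightarrow> real)
    \<Rightarrow> (nat \<Rightarrow> 'a \<Rightarrow> real) \<Rightarrow> bool" where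
  "simple_pred F h0 n s h \<longleftrightarrow>
     h0 \<in> borel_measurable (F 0) \<and> (\<forall>\<omega>\<in>space (F 0). \<bar>h0 \<omega>\<bar> \<le> 1) \<and>
     0 \<le> s 0 \<and> (\<forall>i<n. s i \<le> s (Suc i)) \<and>
     (\<forall>i<n. h i \<in> borel_measurable (F (s i)) \<and> (\<forall>\<omega>\<in>space (F (s i)). \<bar>h i \<omega>\<bar> \<le> 1))"

definition elem_int :: "(real \<Rightarrow> 'a \<Rightarrow> real) \<Rightarrow> ('a \<Rightarrow> real) \<Rightarrow> nat \<Rightarrow> (nat \<Rightarrow> real)
    \<Rightarrow> (nat \<Rightarrow> 'a \<Rightarrow> real) \<Rightarrow> real \<Rightarrow> 'a \<Rightarrow> real" where
  "elem_int X h0 n s h t \<omega> = h0 \<omega> * X 0 \<omega> +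
     (\<Sum>i<n. h i \<omega> * (X (min (s (Suc i)) t) \<omega> - X (min (s i) t) \<omega>))"

definition bounded_in_prob :: "'a measure \<Rightarrow> ('a \<Rightarrow> real) set \<Rightarrow> bool" where
  "bounded_in_prob P Ys \<longleftrightarrow>
     (\<forall>e>0. \<exists>c. \<forall>Y\<in>Ys. measure P {\<omega>\<in>space P. c < \<bar>Y \<omega>\<bar>} \<le> e)"

text \<open>Semimartingale = adapted cadlag good integrator (Bichteler--Dellacherie):
  for each t the elementary integrals of integrands bounded by 1 are bounded in probability.\<close>
definition semimartingale :: "'a measure \<Rightarrow> (real \<Rightarrow> 'a measure) \<Rightarrow> (real \<Rightarrow> 'a \<Rightarrow> real) \<Rightarrow> bool" where
  "semimartingale P F X \<longleftrightarrow>
     adapted F X \<and> (AE \<omega> in P. cadlag (\<lambda>t. X t \<omega>)) \<and>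
     (\<forall>t\<ge>0. bounded_in_prob P {elem_int X h0 n s h t | h0 n s h. simple_pred F h0 n s h})"

definition pricing_kernel :: "'a measure \<Rightarrow> (real \<Rightarrow> 'a measure) \<Rightarrow> (real \<Rightarrow> 'a \<Rightarrow> real) \<Rightarrow> bool" where
  "pricing_kernel P F K \<longleftrightarrow>
     semimartingale P F K \<and>
     (AE \<omega> in P. \<forall>t\<ge>0. 0 < K t \<omega>) \<and>
     (AE \<omega> in P. K 0 \<omega> = 1) \<and>
     (AE \<omega> in P. \<forall>t>0. \<exists>l>0. ((\<lambda>s. K s \<omega>) \<longlongrightarrow> l) (at_left t)) \<and>
     (\<forall>t T. 0 \<le> t \<longrightarrow> t < T \<longrightarrow> integrable P (\<lambda>\<omega>. K T \<omega> / K t \<omega>))"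

definition cexp :: "'a measure \<Rightarrow> (real \<Rightarrow> 'a measure) \<Rightarrow> real \<Rightarrow> ('a \<Rightarrow> real) \<Rightarrow> 'a \<Rightarrow> real" where
  "cexp P F t X = real_cond_exp P (F t) X"

definition price :: "'a measure \<Rightarrow> (real \<Rightarrow> 'a measure) \<Rightarrow> (real \<Rightarrow> 'a \<Rightarrow> real) \<Rightarrow> real \<Rightarrow> real \<Rightarrow> 'a \<Rightarrow> real" where
  "price P F K t T = cexp P F t (\<lambda>\<omega>. K T \<omega> / K t \<omega>)"

text \<open>Conditions (a) and (b) for K, with M the L^1-limit in (a) (M_0 = 1) and lam the
  constant with lim E[K_{T-t}]/E[K_T] = exp(lam t).\<close>
definition kernel_limits :: "'a measure \<Rightarrow> (real \<Rightarrow> 'a measure) \<Rightarrow> (real \<Rightarrow> 'a \<Rightarrow> real)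
    \<Rightarrow> (real \<Rightarrow> 'a \<Rightarrow> real) \<Rightarrow> real \<Rightarrow> bool" where
  "kernel_limits P F K M lam \<longleftrightarrow>
     (\<forall>\<omega>\<in>space P. M 0 \<omega> = 1) \<and>
     (\<forall>t>0. M t \<in> borel_measurable (F t) \<and> integrable P (M t) \<and> (AE \<omega> in P. 0 < M t \<omega>) \<and>
        ((\<lambda>T. \<integral>\<omega>. \<bar>cexp P F t (K T) \<omega> / (\<integral>x. K T x \<partial>P) - M t \<omega>\<bar> \<partial>P) \<longlongrightarrow> 0) at_top) \<and>
     (\<forall>t>0. \<exists>l. 0 < l \<and> ((\<lambda>T. (\<integral>x. K (T - t) x \<partial>P) / (\<integral>x. K T x \<partial>P)) \<longlongrightarrow> l) at_top) \<and>
     (\<forall>t>0. ((\<lambda>T. (\<integral>x. K (T - t) x \<partial>P) / (\<integral>x. K T x \<partial>P)) \<longlongrightarrow> exp (lam * t)) at_top)"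

definition emery_lim :: "'a measure \<Rightarrow> (real \<Rightarrow> 'a measure) \<Rightarrow> (real \<Rightarrow> real \<Rightarrow> 'a \<Rightarrow> real)
    \<Rightarrow> (real \<Rightarrow> 'a \<Rightarrow> real) \<Rightarrow> bool" where
  "emery_lim P F X Y \<longleftrightarrow>
     (\<forall>t\<ge>0. ((\<lambda>T. Sup {\<integral>\<omega>. min 1 \<bar>elem_int (\<lambda>u \<omega>. X T u \<omega> - Y u \<omega>) h0 n s h t \<omega>\<bar> \<partial>P
                          | h0 n s h. simple_pred F h0 n s h}) \<longlongrightarrow> 0) at_top)"

definition is_pi :: "'a measure \<Rightarrow> (real \<Rightarrow> 'a measure) \<Rightarrow> (real \<Rightarrow> 'a \<Rightarrow> real)
    \<Rightarrow> (real \<Rightarrow> 'a \<Rightarrow> real) \<Rightarrow> bool" where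
  "is_pi P F K piK \<longleftrightarrow>
     (\<forall>s\<ge>0. piK s \<in> borel_measurable (F s) \<and> (AE \<omega> in P. 0 < piK s \<omega>)) \<and>
     (\<exists>Pi. (\<forall>T s. 0 \<le> s \<longrightarrow> s < T \<longrightarrow> Pi T s \<in> borel_measurable (F s) \<and>
              (AE \<omega> in P. Pi T s \<omega> = price P F K s T \<omega> / price P F K 0 (T - s) \<omega>)) \<and>
           emery_lim P F Pi piK)"

text \<open>Conditional expectation E^Q_t[X] for F_T-measurable X, where Q|F_T = M_T P|F_T.\<close>
definition cexp_dens :: "'a measure \<Rightarrow> (real \<Rightarrow> 'a measure) \<Rightarrow> (real \<Rightarrow> 'a \<Rightarrow> real) \<Rightarrow> real
    \<Rightarrow> real \<Rightarrow> ('a \<Rightarrow> real) \<Rightarrow> 'a \<Rightarrow> real" where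
  "cexp_dens P F M T t X = real_cond_exp (density P (\<lambda>\<omega>. ennreal (M T \<omega>))) (F t) X"

text \<open>Exponential yield rho^L_{t,T}(G_T), with B the long bond and L|F_T = M_T P|F_T.\<close>
definition exp_yield :: "'a measure \<Rightarrow> (real \<Rightarrow> 'a measure) \<Rightarrow> (real \<Rightarrow> 'a \<Rightarrow> real)
    \<Rightarrow> (real \<Rightarrow> 'a \<Rightarrow> real) \<Rightarrow> (real \<Rightarrow> 'a \<Rightarrow> real) \<Rightarrow> real \<Rightarrow> real \<Rightarrow> 'a \<Rightarrow> real" where
  "exp_yield P F M B G t T \<omega> =
     1 / (T - t) * ln (cexp_dens P F M T t (G T) \<omega> /
                       cexp_dens P F M T t (\<lambda>x. G T x * B t x / B T x) \<omega>)"

definition locally_equivalent :: "'a measure \<Rightarrow> (real \<Rightarrow> 'a measure) \<Rightarrow> 'a measure \<Rightarrow> bool" where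
  "locally_equivalent P F Q \<longleftrightarrow>
     prob_space Q \<and> sets Q = sets P \<and>
     (\<forall>t\<ge>0. \<forall>A\<in>sets (F t). emeasure P A = 0 \<longleftrightarrow> emeasure Q A = 0)"

end

theory Submission
  imports Defs
begin


lemma dens_fin_sub:
  assumes "prob_space P" "subalgebra P Fs" "integrable P D"
  shows "finite_measure_subalgebra (density P (\<lambda>x. ennreal (D x))) Fs"
proof -
  have Dm[measurable]: "D \<in> borel_measurable P" using assms(3) by auto
  have "(\<integral>\<^sup>+x. ennreal (D x) \<partial>P) \<le> (\<integral>\<^sup>+x. ennreal (norm (D x)) \<partial>P)"
    by (intro nn_integral_mono) auto
  also have "\<dots> < \<infinity>" using assms(3) by (simp add: integrable_iff_bounded)
  finally have "(\<integral>\<^sup>+x. ennreal (D x) \<partial>P) < \<infinity>" .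
  then have "emeasure (density P (\<lambda>x. ennreal (D x))) (space (density P (\<lambda>x. ennreal (D x)))) \<noteq> \<infinity>"
  proof -
    have "emeasure (density P (\<lambda>x. ennreal (D x))) (space P) = (\<integral>\<^sup>+x. ennreal (D x) * indicator (space P) x \<partial>P)"
      by (rule emeasure_density) auto
    also have "\<dots> = (\<integral>\<^sup>+x. ennreal (D x) \<partial>P)"
      by (rule nn_integral_cong) (simp add: indicator_def)
    finally show ?thesis using \<open>(\<integral>\<^sup>+x. ennreal (D x) \<partial>P) < \<infinity>\<close> by simp
  qed
  then have "finite_measure (density P (\<lambda>x. ennreal (D x)))"
    by (rule finite_measureI)
  moreover have "subalgebra (density P (\<lambda>x. ennreal (D x))) Fs"
    using assms(2) by (simp add: subalgebra_def)
  ultimately show ?thesis by (simp add: finite_measure_subalgebra_def finite_measure_subalgebra_axioms_def)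
qed

lemma bayes:
  fixes D :: "'a \<Rightarrow> real" and X :: "'a \<Rightarrow> ennreal"
  assumes sP: "sigma_finite_subalgebra P Fs"
    and sN: "sigma_finite_subalgebra (density P (\<lambda>x. ennreal (D x))) Fs"
    and [measurable]: "D \<in> borel_measurable P" "X \<in> borel_measurable P"
  shows "AE x in P. nn_cond_exp (density P (\<lambda>x. ennreal (D x))) Fs X x * nn_cond_exp P Fs (\<lambda>x. ennreal (D x)) x
        = nn_cond_exp P Fs (\<lambda>x. ennreal (D x) * X x) x"
proof -
  interpret sigma_finite_subalgebra P Fs by fact
  interpret N: sigma_finite_subalgebra "density P (\<lambda>x. ennreal (D x))" Fs by fact
  let ?N = "density P (\<lambda>x. ennreal (D x))"
  have XN[measurable]: "X \<in> borel_measurable ?N" by simp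
  show ?thesis
  proof (rule nn_cond_exp_charact)
    fix A assume A[measurable]: "A \<in> sets Fs"
    have AP[measurable]: "A \<in> sets P" using A subalg by (meson subalgebra_def subsetD)
    have e1[measurable]: "nn_cond_exp ?N Fs X \<in> borel_measurable Fs" by simp
    have m2[measurable]: "(\<lambda>x. indicator A x * nn_cond_exp ?N Fs X x) \<in> borel_measurable Fs" by measurable
    have m3[measurable]: "(\<lambda>x. indicator A x * nn_cond_exp ?N Fs X x) \<in> borel_measurable P"
      using m2 measurable_from_subalg[OF subalg] by blast
    have "(\<integral>\<^sup>+x\<in>A. nn_cond_exp ?N Fs X x * nn_cond_exp P Fs (\<lambda>x. ennreal (D x)) x \<partial>P)
        = (\<integral>\<^sup>+x. (indicator A x * nn_cond_exp ?N Fs X x) * nn_cond_exp P Fs (\<lambda>x. ennreal (D x)) x \<partial>P)"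
      by (simp add: mult.commute mult.left_commute)
    also have "\<dots> = (\<integral>\<^sup>+x. (indicator A x * nn_cond_exp ?N Fs X x) * ennreal (D x) \<partial>P)"
      by (rule nn_cond_exp_intg) auto
    also have "\<dots> = (\<integral>\<^sup>+x. indicator A x * nn_cond_exp ?N Fs X x \<partial>?N)"
      by (subst nn_integral_density) (auto simp: mult.commute)
    also have "\<dots> = (\<integral>\<^sup>+x. indicator A x * X x \<partial>?N)"
      by (rule N.nn_cond_exp_intg) auto
    also have "\<dots> = (\<integral>\<^sup>+x\<in>A. ennreal (D x) * X x \<partial>P)"
      by (subst nn_integral_density) (auto simp: mult.commute mult.left_commute)
    finally show "(\<integral>\<^sup>+x\<in>A. ennreal (D x) * X x \<partial>P) = (\<integral>\<^sup>+x\<in>A. nn_cond_exp ?N Fs X x * nn_cond_exp P Fs (\<lambda>x. ennreal (D x)) x \<partial>P)"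
      by simp
  qed auto
qed



lemma nn_cond_exp_zero:
  assumes "sigma_finite_subalgebra N Fs"
  shows "AE x in N. nn_cond_exp N Fs (\<lambda>_. 0) x = 0"
proof -
  interpret sigma_finite_subalgebra N Fs by fact
  have "AE x in N. (\<lambda>_. 0::ennreal) x = nn_cond_exp N Fs (\<lambda>_. 0) x"
    by (rule nn_cond_exp_charact) auto
  then show ?thesis by auto
qed

lemma real_cond_exp_nn:
  fixes f :: "'a \<Rightarrow> real"
  assumes "sigma_finite_subalgebra N Fs" and [measurable]: "f \<in> borel_measurable N"
    and "AE x in N. 0 \<le> f x"
  shows "AE x in N. real_cond_exp N Fs f x = enn2real (nn_cond_exp N Fs (\<lambda>x. ennreal (f x)) x)"
proof -
  interpret sigma_finite_subalgebra N Fs by fact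
  have "AE x in N. nn_cond_exp N Fs (\<lambda>x. ennreal (- f x)) x = nn_cond_exp N Fs (\<lambda>_. 0) x"
    by (rule nn_cond_exp_cong) (use assms(3) in \<open>auto simp: ennreal_neg\<close>)
  with nn_cond_exp_zero[OF assms(1)] show ?thesis
    by (auto simp: real_cond_exp_def)
qed

lemma nn_cond_exp_pos_fin:
  fixes D :: "'a \<Rightarrow> real"
  assumes "sigma_finite_subalgebra P Fs" "integrable P D" "AE x in P. 0 < D x"
  shows "AE x in P. 0 < nn_cond_exp P Fs (\<lambda>x. ennreal (D x)) x \<and> nn_cond_exp P Fs (\<lambda>x. ennreal (D x)) x < \<infinity>"
proof -
  interpret sigma_finite_subalgebra P Fs by fact
  have Dm[measurable]: "D \<in> borel_measurable P" using assms(2) by auto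
  let ?E = "nn_cond_exp P Fs (\<lambda>x. ennreal (D x))"
  have "(\<integral>\<^sup>+x. ?E x \<partial>P) = (\<integral>\<^sup>+x. 1 * ?E x \<partial>P)" by simp
  also have "\<dots> = (\<integral>\<^sup>+x. 1 * ennreal (D x) \<partial>P)" by (rule nn_cond_exp_intg) auto
  also have "\<dots> \<le> (\<integral>\<^sup>+x. ennreal (norm (D x)) \<partial>P)" by (intro nn_integral_mono) auto
  also have "\<dots> < \<infinity>" using assms(2) by (simp add: integrable_iff_bounded)
  finally have fin: "AE x in P. ?E x \<noteq> \<infinity>"
    by (intro nn_integral_PInf_AE) auto
  define A where "A = {x\<in>space P. ?E x = 0}"
  have "{x\<in>space Fs. ?E x = 0} \<in> sets Fs" by measurable
  moreover have "space Fs = space P" using subalg by (simp add: subalgebra_def)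
  ultimately have AF[measurable]: "A \<in> sets Fs" unfolding A_def by simp
  have AP[measurable]: "A \<in> sets P" using AF subalg by (auto simp: subalgebra_def)
  have "(\<integral>\<^sup>+x. indicator A x * ennreal (D x) \<partial>P) = (\<integral>\<^sup>+x. indicator A x * ?E x \<partial>P)"
    by (rule nn_cond_exp_intg[symmetric]) auto
  also have "\<dots> = 0" by (rule nn_integral_zero') (auto simp: A_def indicator_def)
  finally have "AE x in P. indicator A x * ennreal (D x) = 0"
    by (subst nn_integral_0_iff_AE[symmetric]) auto
  then have "AE x in P. x \<notin> A" using assms(3) by eventually_elim (auto simp: indicator_def)
  then have "AE x in P. ?E x \<noteq> 0" by (auto simp: A_def)
  with fin show ?thesis by eventually_elim (auto simp: top.not_eq_extremum zero_less_iff_neq_zero)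
qed



lemma cexp_trivial:
  fixes f :: "'a \<Rightarrow> real"
  assumes "prob_space P" "subalgebra P F0"
    and triv: "\<forall>A\<in>sets F0. measure P A = 0 \<or> measure P A = 1" and int: "integrable P f"
  shows "AE x in P. real_cond_exp P F0 f x = (\<integral>x. f x \<partial>P)"
proof -
  interpret prob_space P by fact
  interpret finite_measure_subalgebra P F0
    using assms(2) by (simp add: finite_measure_subalgebra_def finite_measure_subalgebra_axioms_def finite_measure_axioms)
  have fm[measurable]: "f \<in> borel_measurable P" using int by auto
  show ?thesis
  proof (rule real_cond_exp_charact)
    fix A assume A: "A \<in> sets F0"
    have AP[measurable]: "A \<in> sets P" using A subalg by (meson subalgebra_def subsetD)
    from triv A consider "measure P A = 0" | "measure P A = 1" by blast
    then show "(\<integral>x\<in>A. f x \<partial>P) = (\<integral>x\<in>A. (\<integral>x. f x \<partial>P) \<partial>P)"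
    proof cases
      case 1
      then have "A \<in> null_sets P" using AP by (simp add: null_sets_def emeasure_eq_measure)
      then have ae: "AE x in P. x \<notin> A" by (rule AE_not_in)
      have "(\<integral>x\<in>A. f x \<partial>P) = (\<integral>x. 0 \<partial>P)" unfolding set_lebesgue_integral_def
        by (rule integral_cong_AE) (use ae in auto)
      moreover have "(\<integral>x\<in>A. (\<integral>x. f x \<partial>P) \<partial>P) = (\<integral>x. 0 \<partial>P)" unfolding set_lebesgue_integral_def
        by (rule integral_cong_AE) (use ae in auto)
      ultimately show ?thesis by simp
    next
      case 2
      then have ae: "AE x in P. x \<in> A" by (rule AE_prob_1)
      have "(\<integral>x\<in>A. f x \<partial>P) = (\<integral>x. f x \<partial>P)" unfolding set_lebesgue_integral_def
        by (rule integral_cong_AE) (use ae in auto)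
      moreover have "(\<integral>x\<in>A. (\<integral>x. f x \<partial>P) \<partial>P) = (\<integral>x. (\<integral>x. f x \<partial>P) \<partial>P)" unfolding set_lebesgue_integral_def
        proof (rule integral_cong_AE)
          show "AE x in P. indicator A x *\<^sub>R (\<integral>x. f x \<partial>P) = (\<integral>x. f x \<partial>P)"
            using ae by eventually_elim auto
        qed auto
      ultimately show ?thesis by (simp add: prob_space)
    qed
  qed (auto simp: int)
qed



lemma int_le1:
  fixes f :: "'a \<Rightarrow> real"
  assumes "prob_space P" "\<And>x. f x \<le> 1"
  shows "(\<integral>x. f x \<partial>P) \<le> 1"
proof (cases "integrable P f")
  case True
  interpret prob_space P by fact
  have "(\<integral>x. f x \<partial>P) \<le> (\<integral>x. 1 \<partial>P)" by (rule integral_mono) (use True assms in auto)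
  then show ?thesis by (simp add: prob_space)
next
  case False then show ?thesis by (simp add: not_integrable_integral_eq)
qed

lemma emery_fixed:
  assumes "prob_space P" "emery_lim P F X Y" "0 \<le> s"
  shows "((\<lambda>T. \<integral>\<omega>. min 1 \<bar>X T s \<omega> - Y s \<omega>\<bar> \<partial>P) \<longlongrightarrow> 0) at_top"
proof -
  define sq where "sq = (\<lambda>i::nat. if i = 0 then 0 else s)"
  let ?S = "\<lambda>T. {\<integral>\<omega>. min 1 \<bar>elem_int (\<lambda>u \<omega>. X T u \<omega> - Y u \<omega>) h0 n sv h s \<omega>\<bar> \<partial>P
                          | h0 n sv h. simple_pred F h0 n sv h}"
  have lim: "((\<lambda>T. Sup (?S T)) \<longlongrightarrow> 0) at_top" using assms(2) assms(3) unfolding emery_lim_def by blast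
  have sp: "simple_pred F (\<lambda>_. 1) 1 sq (\<lambda>_ _. 1)"
    using assms(3) by (auto simp: simple_pred_def sq_def)
  have ei: "elem_int (\<lambda>u \<omega>. X T u \<omega> - Y u \<omega>) (\<lambda>_. 1) 1 sq (\<lambda>_ _. 1) s \<omega> = X T s \<omega> - Y s \<omega>" for T \<omega>
    using assms(3) by (simp add: elem_int_def sq_def)
  have mem: "(\<integral>\<omega>. min 1 \<bar>X T s \<omega> - Y s \<omega>\<bar> \<partial>P) \<in> ?S T" for T
    using sp by (auto simp: ei[symmetric] intro!: exI[of _ "\<lambda>_. 1"] exI[of _ "1::nat"] exI[of _ sq] exI[of _ "\<lambda>_ _. 1"])
  have bdd: "bdd_above (?S T)" for T
    by (rule bdd_aboveI[of _ 1]) (auto intro!: int_le1 assms(1))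
  have up: "(\<integral>\<omega>. min 1 \<bar>X T s \<omega> - Y s \<omega>\<bar> \<partial>P) \<le> Sup (?S T)" for T
    by (rule cSup_upper[OF mem bdd])
  have lo: "0 \<le> (\<integral>\<omega>. min 1 \<bar>X T s \<omega> - Y s \<omega>\<bar> \<partial>P)" for T
    by (rule integral_nonneg_AE) auto
  show ?thesis
    by (rule tendsto_sandwich[OF always_eventually always_eventually tendsto_const lim]) (use up lo in blast)+
qed

lemma ident:
  fixes X :: "real \<Rightarrow> 'a \<Rightarrow> real"
  assumes "prob_space P" and [measurable]: "Y \<in> borel_measurable P" "Z \<in> borel_measurable P"
    and ev: "eventually (\<lambda>T. X T \<in> borel_measurable P) at_top"
    and l1: "((\<lambda>T. \<integral>\<omega>. min 1 \<bar>X T \<omega> - Y \<omega>\<bar> \<partial>P) \<longlongrightarrow> 0) at_top"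
    and l2: "((\<lambda>T. \<integral>\<omega>. min 1 \<bar>X T \<omega> - Z \<omega>\<bar> \<partial>P) \<longlongrightarrow> 0) at_top"
  shows "AE \<omega> in P. Y \<omega> = Z \<omega>"
proof -
  interpret prob_space P by fact
  have bint: "integrable P (\<lambda>\<omega>. min 1 \<bar>f \<omega>\<bar>)" if [measurable]: "f \<in> borel_measurable P" for f :: "'a \<Rightarrow> real"
    by (rule integrable_const_bound[of _ 1]) auto
  have "eventually (\<lambda>T. (\<integral>\<omega>. min 1 \<bar>Y \<omega> - Z \<omega>\<bar> \<partial>P) \<le>
     (\<integral>\<omega>. min 1 \<bar>X T \<omega> - Y \<omega>\<bar> \<partial>P) + (\<integral>\<omega>. min 1 \<bar>X T \<omega> - Z \<omega>\<bar> \<partial>P)) at_top"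
    using ev
  proof eventually_elim
    case (elim T)
    note [measurable] = elim
    have "(\<integral>\<omega>. min 1 \<bar>Y \<omega> - Z \<omega>\<bar> \<partial>P) \<le> (\<integral>\<omega>. min 1 \<bar>X T \<omega> - Y \<omega>\<bar> + min 1 \<bar>X T \<omega> - Z \<omega>\<bar> \<partial>P)"
      by (intro integral_mono bint Bochner_Integration.integrable_add) auto
    also have "\<dots> = (\<integral>\<omega>. min 1 \<bar>X T \<omega> - Y \<omega>\<bar> \<partial>P) + (\<integral>\<omega>. min 1 \<bar>X T \<omega> - Z \<omega>\<bar> \<partial>P)"
      by (intro Bochner_Integration.integral_add bint) auto
    finally show ?case .
  qed
  then have "(\<integral>\<omega>. min 1 \<bar>Y \<omega> - Z \<omega>\<bar> \<partial>P) \<le> 0 + 0"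
    by (intro tendsto_le[OF _ tendsto_add[OF l1 l2] tendsto_const]) auto
  moreover have "0 \<le> (\<integral>\<omega>. min 1 \<bar>Y \<omega> - Z \<omega>\<bar> \<partial>P)" by (rule integral_nonneg_AE) auto
  ultimately have "(\<integral>\<omega>. min 1 \<bar>Y \<omega> - Z \<omega>\<bar> \<partial>P) = 0" by simp
  then have "AE \<omega> in P. min 1 \<bar>Y \<omega> - Z \<omega>\<bar> = 0"
    by (subst (asm) integral_nonneg_eq_0_iff_AE) (auto intro: bint)
  then show ?thesis by eventually_elim (auto simp: min_def split: if_splits)
qed



lemma inprob:
  fixes V :: "real \<Rightarrow> 'a \<Rightarrow> real"
  assumes "prob_space P" and Km[measurable]: "K \<in> borel_measurable P" and Kpos: "AE x in P. 0 < K x"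
    and ev: "eventually (\<lambda>T. integrable P (V T)) at_top"
    and lim: "((\<lambda>T. \<integral>\<omega>. \<bar>V T \<omega>\<bar> \<partial>P) \<longlongrightarrow> 0) at_top"
  shows "((\<lambda>T. \<integral>\<omega>. min 1 \<bar>V T \<omega> / K \<omega>\<bar> \<partial>P) \<longlongrightarrow> 0) at_top"
proof (rule order_tendstoI)
  interpret prob_space P by fact
  fix a :: real assume "a < 0"
  moreover have "0 \<le> (\<integral>\<omega>. min 1 \<bar>V T \<omega> / K \<omega>\<bar> \<partial>P)" for T by (rule integral_nonneg_AE) auto
  ultimately show "eventually (\<lambda>T. a < (\<integral>\<omega>. min 1 \<bar>V T \<omega> / K \<omega>\<bar> \<partial>P)) at_top"
    by (intro always_eventually) (auto intro: less_le_trans)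
next
  interpret prob_space P by fact
  fix e :: real assume e: "0 < e"
  let ?D = "distr P borel K"
  interpret D: real_distribution ?D by (rule real_distribution_distr) simp
  have cdfeq: "cdf ?D d = measure P {x\<in>space P. K x \<le> d}" for d
  proof -
    have "cdf ?D d = measure P (K -` {..d} \<inter> space P)"
      unfolding cdf_def by (rule measure_distr) auto
    also have "K -` {..d} \<inter> space P = {x\<in>space P. K x \<le> d}" by auto
    finally show ?thesis .
  qed
  have "{x\<in>space P. K x \<le> 0} \<in> null_sets P"
    using Kpos by (subst AE_iff_null_sets) (auto elim!: AE_mp)
  then have c0: "cdf ?D 0 = 0" by (simp add: cdfeq measure_eq_0_null_sets)
  have "(cdf ?D \<longlongrightarrow> cdf ?D 0) (at_right 0)"
    using D.finite_borel_measure_M finite_borel_measure.cdf_is_right_cont continuous_within by blast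
  then have "eventually (\<lambda>d. cdf ?D d < e/2) (at_right 0)"
    using e c0 by (intro order_tendstoD(2)) auto
  then obtain b where b: "b > 0" "\<And>y. 0 < y \<Longrightarrow> y < b \<Longrightarrow> cdf ?D y < e/2"
    by (auto simp: eventually_at_right_field)
  define d where "d = b/2"
  have d0: "0 < d" using b by (simp add: d_def)
  have "cdf ?D d < e/2" using b by (intro b(2)) (auto simp: d_def)
  then have d: "0 < d" "measure P {x\<in>space P. K x \<le> d} < e/2"
    using d0 by (auto simp: cdfeq)
  have "eventually (\<lambda>T. (\<integral>\<omega>. \<bar>V T \<omega>\<bar> \<partial>P) < d * (e/2)) at_top"
    using d e by (intro order_tendstoD(2)[OF lim]) auto
  with ev show "eventually (\<lambda>T. (\<integral>\<omega>. min 1 \<bar>V T \<omega> / K \<omega>\<bar> \<partial>P) < e) at_top"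
  proof eventually_elim
    case (elim T)
    have Vm[measurable]: "V T \<in> borel_measurable P" using elim(1) by auto
    have ia: "integrable P (\<lambda>\<omega>. \<bar>V T \<omega>\<bar> / d)" using elim(1) by auto
    have ib: "integrable P (\<lambda>\<omega>. indicator {x\<in>space P. K x \<le> d} \<omega> :: real)"
      by (rule integrable_const_bound[of _ 1]) auto
    have "(\<integral>\<omega>. min 1 \<bar>V T \<omega> / K \<omega>\<bar> \<partial>P) \<le> (\<integral>\<omega>. \<bar>V T \<omega>\<bar> / d + indicator {x\<in>space P. K x \<le> d} \<omega> \<partial>P)"
    proof (rule integral_mono)
      show "integrable P (\<lambda>\<omega>. min 1 \<bar>V T \<omega> / K \<omega>\<bar>)"
        by (rule integrable_const_bound[of _ 1]) auto
      show "integrable P (\<lambda>\<omega>. \<bar>V T \<omega>\<bar> / d + indicator {x\<in>space P. K x \<le> d} \<omega>)"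
        using ia ib by auto
      fix \<omega> assume "\<omega> \<in> space P"
      show "min 1 \<bar>V T \<omega> / K \<omega>\<bar> \<le> \<bar>V T \<omega>\<bar> / d + indicator {x\<in>space P. K x \<le> d} \<omega>"
      proof (cases "K \<omega> \<le> d")
        case True
        have "0 \<le> \<bar>V T \<omega>\<bar> / d" using d by simp
        then show ?thesis using True \<open>\<omega> \<in> space P\<close> by (auto simp: indicator_def min_def)
      next
        case False
        then have "\<bar>V T \<omega> / K \<omega>\<bar> \<le> \<bar>V T \<omega>\<bar> / d"
          using d by (auto simp: abs_div intro!: divide_left_mono)
        then show ?thesis using False by (auto simp: indicator_def)
      qed
    qed
    also have "\<dots> = (\<integral>\<omega>. \<bar>V T \<omega>\<bar> \<partial>P) / d + measure P {x\<in>space P. K x \<le> d}"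
      using ia ib by (simp add: Bochner_Integration.integral_add)
    also have "\<dots> < e/2 + e/2"
      using elim(2) d by (intro add_strict_mono) (auto simp: divide_less_eq mult.commute)
    finally show ?case by simp
  qed
qed



lemma usual_facts:
  assumes "usual_filtered_space P F"
  shows "prob_space P" "\<And>t. 0 \<le> t \<Longrightarrow> subalgebra P (F t)"
    "\<forall>A\<in>sets (F 0). measure P A = 0 \<or> measure P A = 1"
proof -
  note a = assms[unfolded usual_filtered_space_def]
  show "prob_space P" using a by (elim conjE)
  show "\<And>t. 0 \<le> t \<Longrightarrow> subalgebra P (F t)" using a by (elim conjE) simp
  show "\<forall>A\<in>sets (F 0). measure P A = 0 \<or> measure P A = 1" using a by (elim conjE)
qed

lemma kernel_meas:
  assumes "usual_filtered_space P F" "pricing_kernel P F K" "0 \<le> u"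
  shows "K u \<in> borel_measurable (F u)" "K u \<in> borel_measurable P"
proof -
  show a: "K u \<in> borel_measurable (F u)"
    using assms(2,3) unfolding pricing_kernel_def semimartingale_def adapted_def by (elim conjE) simp
  show "K u \<in> borel_measurable P"
    by (rule measurable_from_subalg[OF usual_facts(2)[OF assms(1) assms(3)] a])
qed

lemma kernel_int:
  assumes "usual_filtered_space P F" "pricing_kernel P F K" "0 < T"
  shows "integrable P (K T)"
proof -
  have m0[measurable]: "K 0 \<in> borel_measurable P" "K T \<in> borel_measurable P"
    using kernel_meas[OF assms(1,2)] assms(3) by auto
  have i: "integrable P (\<lambda>\<omega>. K T \<omega> / K 0 \<omega>)" using assms(2,3) unfolding pricing_kernel_def by (elim conjE) simp
  have "AE \<omega> in P. K 0 \<omega> = 1" using assms(2) unfolding pricing_kernel_def by (elim conjE)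
  then have "AE \<omega> in P. K T \<omega> / K 0 \<omega> = K T \<omega>" by eventually_elim auto
  then show ?thesis using i by (subst (asm) integrable_cong_AE) auto
qed

lemma kernel_pos:
  assumes "pricing_kernel P F K" "0 \<le> u"
  shows "AE \<omega> in P. 0 < K u \<omega>"
proof -
  have "AE \<omega> in P. \<forall>t\<ge>0. 0 < K t \<omega>" using assms(1) unfolding pricing_kernel_def by (elim conjE)
  then show ?thesis by eventually_elim (use assms(2) in auto)
qed



lemma decomp:
  assumes usual: "usual_filtered_space P F" and Kk: "pricing_kernel P F K"
    and lim: "kernel_limits P F K M lam" and pi: "is_pi P F K piK" and s: "0 < s"
  shows "AE \<omega> in P. piK s \<omega> = exp (- lam * s) * M s \<omega> / K s \<omega>"
proof -
  interpret prob_space P using usual_facts(1)[OF usual] .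
  have subs: "subalgebra P (F s)" "subalgebra P (F 0)" using usual_facts(2)[OF usual] s by auto
  have triv: "\<forall>A\<in>sets (F 0). measure P A = 0 \<or> measure P A = 1" using usual_facts(3)[OF usual] .
  interpret Fs: finite_measure_subalgebra P "F s"
    using subs by (simp add: finite_measure_subalgebra_def finite_measure_subalgebra_axioms_def finite_measure_axioms)
  note L = lim[unfolded kernel_limits_def]
  have Ms: "M s \<in> borel_measurable (F s)" "integrable P (M s)"
    and L1: "((\<lambda>T. \<integral>\<omega>. \<bar>cexp P F s (K T) \<omega> / (\<integral>x. K T x \<partial>P) - M s \<omega>\<bar> \<partial>P) \<longlongrightarrow> 0) at_top"
    using L s by (elim conjE; simp)+
  have Msm[measurable]: "M s \<in> borel_measurable P" by (rule measurable_from_subalg[OF subs(1) Ms(1)])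
  have rl: "((\<lambda>T. (\<integral>x. K (T - s) x \<partial>P) / (\<integral>x. K T x \<partial>P)) \<longlongrightarrow> exp (lam * s)) at_top"
    using L s by (elim conjE; simp)
  obtain Pi where PiP: "\<And>T u. 0 \<le> u \<Longrightarrow> u < T \<Longrightarrow> Pi T u \<in> borel_measurable (F u) \<and>
              (AE \<omega> in P. Pi T u \<omega> = price P F K u T \<omega> / price P F K 0 (T - u) \<omega>)"
    and em: "emery_lim P F Pi piK" and piKm: "piK s \<in> borel_measurable (F s)"
    using pi s unfolding is_pi_def by (elim conjE exE) (simp, blast)
  have Ksm[measurable]: "K s \<in> borel_measurable (F s)" "K s \<in> borel_measurable P"
    using kernel_meas[OF usual Kk] s by auto
  have Kspos: "AE \<omega> in P. 0 < K s \<omega>" using kernel_pos[OF Kk] s by simp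
  have piKsm[measurable]: "piK s \<in> borel_measurable P" by (rule measurable_from_subalg[OF subs(1) piKm])
  define EK where "EK = (\<lambda>T. \<integral>x. K T x \<partial>P)"
  define r where "r = (\<lambda>T. EK T / EK (T - s))"
  define U where "U = (\<lambda>T. \<lambda>\<omega>. cexp P F s (K T) \<omega> / EK T)"
  define V where "V = (\<lambda>T. \<lambda>\<omega>. U T \<omega> * r T - exp (- lam * s) * M s \<omega>)"
  define Z where "Z = (\<lambda>\<omega>. exp (- lam * s) * M s \<omega> / K s \<omega>)"
  have Zm[measurable]: "Z \<in> borel_measurable P" unfolding Z_def by measurable
  have rlim: "(r \<longlongrightarrow> exp (- lam * s)) at_top"
  proof -
    have "((\<lambda>T. inverse ((\<integral>x. K (T - s) x \<partial>P) / (\<integral>x. K T x \<partial>P))) \<longlongrightarrow> inverse (exp (lam * s))) at_top"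
      by (rule tendsto_inverse[OF rl]) simp
    then show ?thesis by (simp add: r_def EK_def exp_minus)
  qed
  have evpos: "eventually (\<lambda>T. 0 < EK (T - s) / EK T) at_top"
    using order_tendstoD(1)[OF rl, of 0] by (simp add: EK_def)
  have evT: "eventually (\<lambda>T. s < T) at_top" by (rule eventually_gt_at_top)
  have KTi: "integrable P (K T)" if "0 < T" for T using kernel_int[OF usual Kk that] .
  have KTm[measurable]: "K T \<in> borel_measurable P" if "0 \<le> T" for T using kernel_meas[OF usual Kk that] by simp
  have Ui: "integrable P (U T)" if "0 < T" for T
    unfolding U_def cexp_def by (intro integrable_divide Fs.real_cond_exp_int(1) KTi that)
  have Vi: "integrable P (V T)" if "0 < T" for T
    unfolding V_def using Ui[OF that] Ms(2) by auto
  have VL1: "((\<lambda>T. \<integral>\<omega>. \<bar>V T \<omega>\<bar> \<partial>P) \<longlongrightarrow> 0) at_top"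
  proof (rule tendsto_sandwich[OF _ _ tendsto_const])
    show "eventually (\<lambda>T. 0 \<le> (\<integral>\<omega>. \<bar>V T \<omega>\<bar> \<partial>P)) at_top" by (intro always_eventually) auto
    let ?b = "\<lambda>T. \<bar>r T\<bar> * (\<integral>\<omega>. \<bar>U T \<omega> - M s \<omega>\<bar> \<partial>P) + \<bar>r T - exp (- lam * s)\<bar> * (\<integral>\<omega>. \<bar>M s \<omega>\<bar> \<partial>P)"
    show "eventually (\<lambda>T. (\<integral>\<omega>. \<bar>V T \<omega>\<bar> \<partial>P) \<le> ?b T) at_top"
      using evT
    proof eventually_elim
      case (elim T)
      then have T0: "0 < T" using s by simp
      have iUM: "integrable P (\<lambda>\<omega>. \<bar>U T \<omega> - M s \<omega>\<bar>)" using Ui[OF T0] Ms(2) by auto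
      have "(\<integral>\<omega>. \<bar>V T \<omega>\<bar> \<partial>P) \<le> (\<integral>\<omega>. \<bar>r T\<bar> * \<bar>U T \<omega> - M s \<omega>\<bar> + \<bar>r T - exp (- lam * s)\<bar> * \<bar>M s \<omega>\<bar> \<partial>P)"
      proof (rule integral_mono)
        show "integrable P (\<lambda>\<omega>. \<bar>V T \<omega>\<bar>)" using Vi[OF T0] by auto
        show "integrable P (\<lambda>\<omega>. \<bar>r T\<bar> * \<bar>U T \<omega> - M s \<omega>\<bar> + \<bar>r T - exp (- lam * s)\<bar> * \<bar>M s \<omega>\<bar>)"
          using iUM Ms(2) by auto
        fix \<omega>
        have "V T \<omega> = r T * (U T \<omega> - M s \<omega>) + (r T - exp (- lam * s)) * M s \<omega>"
          unfolding V_def by (simp add: algebra_simps)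
        also have "\<bar>\<dots>\<bar> \<le> \<bar>r T\<bar> * \<bar>U T \<omega> - M s \<omega>\<bar> + \<bar>r T - exp (- lam * s)\<bar> * \<bar>M s \<omega>\<bar>"
          by (rule order_trans[OF abs_triangle_ineq]) (simp add: abs_mult)
        finally show "\<bar>V T \<omega>\<bar> \<le> \<bar>r T\<bar> * \<bar>U T \<omega> - M s \<omega>\<bar> + \<bar>r T - exp (- lam * s)\<bar> * \<bar>M s \<omega>\<bar>" .
      qed
      also have "\<dots> = ?b T" using iUM Ms(2) by (simp add: Bochner_Integration.integral_add)
      finally show ?case .
    qed
    have "((\<lambda>T. \<integral>\<omega>. \<bar>U T \<omega> - M s \<omega>\<bar> \<partial>P) \<longlongrightarrow> 0) at_top"
      using L1 by (simp add: U_def EK_def)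
    then have "(?b \<longlongrightarrow> \<bar>exp (- lam * s)\<bar> * 0 + \<bar>exp (- lam * s) - exp (- lam * s)\<bar> * (\<integral>\<omega>. \<bar>M s \<omega>\<bar> \<partial>P)) at_top"
      by (intro tendsto_intros rlim)
    then show "(?b \<longlongrightarrow> 0) at_top" by simp
  qed
  have evVi: "eventually (\<lambda>T. integrable P (V T)) at_top"
    using eventually_gt_at_top[of "0::real"] by eventually_elim (rule Vi)
  have lim2: "((\<lambda>T. \<integral>\<omega>. min 1 \<bar>V T \<omega> / K s \<omega>\<bar> \<partial>P) \<longlongrightarrow> 0) at_top"
    by (rule inprob[OF prob_space_axioms Ksm(2) Kspos evVi VL1])
  have eqPi: "eventually (\<lambda>T. (\<integral>\<omega>. min 1 \<bar>V T \<omega> / K s \<omega>\<bar> \<partial>P) = (\<integral>\<omega>. min 1 \<bar>Pi T s \<omega> - Z \<omega>\<bar> \<partial>P)) at_top"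
    using evT evpos
  proof eventually_elim
    case (elim T)
    have T0: "0 < T" "0 < T - s" using elim s by auto
    have EKnz: "EK T \<noteq> 0" "EK (T - s) \<noteq> 0" using elim(2) by (auto simp: zero_less_divide_iff)
    have Pim[measurable]: "Pi T s \<in> borel_measurable P"
      using PiP[of s T] elim s measurable_from_subalg[OF subs(1)] by auto
    have ae1: "AE \<omega> in P. Pi T s \<omega> = price P F K s T \<omega> / price P F K 0 (T - s) \<omega>"
      using PiP[of s T] elim s by auto
    have "AE \<omega> in P. real_cond_exp P (F s) (\<lambda>\<omega>. (1 / K s \<omega>) * K T \<omega>) \<omega> = (1 / K s \<omega>) * real_cond_exp P (F s) (K T) \<omega>"
      by (rule Fs.real_cond_exp_mult) (use KTm[of T] T0 Kk s in \<open>auto simp: pricing_kernel_def\<close>)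
    then have ae2: "AE \<omega> in P. price P F K s T \<omega> = cexp P F s (K T) \<omega> / K s \<omega>"
      by (simp add: price_def cexp_def)
    have "AE \<omega> in P. real_cond_exp P (F 0) (\<lambda>\<omega>. K (T - s) \<omega> / K 0 \<omega>) \<omega> = (\<integral>\<omega>. K (T - s) \<omega> / K 0 \<omega> \<partial>P)"
      by (rule cexp_trivial[OF prob_space_axioms subs(2) triv])
         (use Kk T0 in \<open>simp add: pricing_kernel_def\<close>)
    moreover have "(\<integral>\<omega>. K (T - s) \<omega> / K 0 \<omega> \<partial>P) = EK (T - s)"
    proof -
      have "AE \<omega> in P. K 0 \<omega> = 1" using Kk unfolding pricing_kernel_def by (elim conjE)
      then have "AE \<omega> in P. K (T - s) \<omega> / K 0 \<omega> = K (T - s) \<omega>" by eventually_elim auto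
      then show ?thesis unfolding EK_def using KTm[of 0] KTm[of "T - s"] T0 by (intro integral_cong_AE) auto
    qed
    ultimately have ae3: "AE \<omega> in P. price P F K 0 (T - s) \<omega> = EK (T - s)"
      by (simp add: price_def cexp_def)
    have "AE \<omega> in P. min 1 \<bar>V T \<omega> / K s \<omega>\<bar> = min 1 \<bar>Pi T s \<omega> - Z \<omega>\<bar>"
      using ae1 ae2 ae3 Kspos
    proof eventually_elim
      case (elim \<omega>)
      have "Pi T s \<omega> - Z \<omega> = cexp P F s (K T) \<omega> / K s \<omega> / EK (T - s) - exp (- lam * s) * M s \<omega> / K s \<omega>"
        using elim by (simp add: Z_def)
      also have "\<dots> = V T \<omega> / K s \<omega>"
        using EKnz elim(4) by (simp add: V_def U_def r_def field_simps)
      finally show ?case by simp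
    qed
    moreover have [measurable]: "V T \<in> borel_measurable P" using Vi[OF T0(1)] by auto
    ultimately show ?case by (intro integral_cong_AE) auto
  qed
  have limZ: "((\<lambda>T. \<integral>\<omega>. min 1 \<bar>Pi T s \<omega> - Z \<omega>\<bar> \<partial>P) \<longlongrightarrow> 0) at_top"
    using tendsto_cong[OF eqPi] lim2 by simp
  have limY: "((\<lambda>T. \<integral>\<omega>. min 1 \<bar>Pi T s \<omega> - piK s \<omega>\<bar> \<partial>P) \<longlongrightarrow> 0) at_top"
    by (rule emery_fixed[OF prob_space_axioms em]) (use s in simp)
  have evm: "eventually (\<lambda>T. Pi T s \<in> borel_measurable P) at_top"
    using evT by eventually_elim (use PiP[of s] s measurable_from_subalg[OF subs(1)] in auto)
  have "AE \<omega> in P. piK s \<omega> = Z \<omega>"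
    by (rule ident[OF prob_space_axioms piKsm Zm evm limY limZ])
  then show ?thesis by (simp add: Z_def)
qed



lemma alg:
  fixes A Bv D DG k1 Pv Qv bt eG pt c C lam T t :: real
  assumes e1: "A * D = k1 * (Pv * DG)" and e2: "Bv * D = (bt * eG) * (Qv * DG)"
    and D: "0 < D" "0 < DG" and eG: "0 < eG" and k1: "k1 = exp (lam * T) * eG"
    and bt: "bt = exp (lam * t) * pt" "0 < pt"
    and R: "c < Pv / Qv" "Pv / Qv < C" "0 < c" and T: "t < T"
  shows "\<bar>1 / (T - t) * ln (A / Bv) - lam\<bar> \<le> (max \<bar>ln c\<bar> \<bar>ln C\<bar> + \<bar>ln pt\<bar>) / (T - t)"
proof -
  have Qv: "Qv \<noteq> 0" using R by auto
  have AB: "A / Bv = exp (lam * (T - t)) * (Pv / Qv) / pt"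
  proof -
    have A: "A = k1 * Pv * DG / D" using e1 D by (simp add: field_simps)
    have B: "Bv = bt * eG * Qv * DG / D" using e2 D by (simp add: field_simps)
    have ex: "exp (lam * T) = exp (lam * t) * exp (lam * (T - t))"
      by (simp add: exp_add[symmetric] algebra_simps)
    show ?thesis unfolding A B k1 bt(1) ex using D eG bt(2) Qv
      by (simp add: field_simps)
  qed
  have Rp: "0 < Pv / Qv" using R by linarith
  have "ln (A / Bv) = lam * (T - t) + ln (Pv / Qv) - ln pt"
  proof -
    have gen: "ln (exp x * r / p) = x + ln r - ln p" if "0 < r" "0 < p" for x r p :: real
      using that by (simp add: ln_mult ln_div)
    show ?thesis unfolding AB by (rule gen[OF Rp bt(2)])
  qed
  then have eq: "1 / (T - t) * ln (A / Bv) - lam = (ln (Pv / Qv) - ln pt) / (T - t)"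
    using T by (simp add: field_simps)
  have lnR: "\<bar>ln (Pv / Qv)\<bar> \<le> max \<bar>ln c\<bar> \<bar>ln C\<bar>"
  proof -
    have "ln c < ln (Pv / Qv)" using R Rp by simp
    moreover have "ln (Pv / Qv) < ln C" using R Rp by simp
    ultimately show ?thesis by linarith
  qed
  have "\<bar>ln (Pv / Qv) - ln pt\<bar> \<le> max \<bar>ln c\<bar> \<bar>ln C\<bar> + \<bar>ln pt\<bar>" using lnR by linarith
  then show ?thesis unfolding eq using T by (simp add: abs_div divide_right_mono)
qed



lemma idr:
  fixes piS piG Mv MGv Sv Gv lam lamG T bt :: real
  assumes p1: "piS = exp (- lam * T) * Mv / Sv" and p2: "piG = exp (- lamG * T) * MGv / (Sv * Gv)"
    and pos: "0 < Mv" "0 < MGv" "0 < Sv" "0 < Gv"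
  shows "Mv * Gv = exp ((lam - lamG) * T) * (MGv * (piS / piG))"
    "Mv * (Gv * bt / (exp (lam * T) * piS)) = (bt * exp (- lamG * T)) * (MGv * (1 / piG))"
proof -
  have e1: "exp ((lam - lamG) * T) = exp (lam * T) / exp (lamG * T)" by (simp add: exp_diff[symmetric] algebra_simps)
  have e2: "exp (- lam * T) = 1 / exp (lam * T)" "exp (- lamG * T) = 1 / exp (lamG * T)"
    by (simp_all add: exp_minus field_simps)
  show "Mv * Gv = exp ((lam - lamG) * T) * (MGv * (piS / piG))"
    unfolding p1 p2 e1 e2 using pos by (simp add: field_simps)
  show "Mv * (Gv * bt / (exp (lam * T) * piS)) = (bt * exp (- lamG * T)) * (MGv * (1 / piG))"
    unfolding p1 p2 e2 using pos by (simp add: field_simps)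
qed

lemma AE_from_dens:
  assumes "AE x in density P (\<lambda>x. ennreal (D x)). Pr x" "D \<in> borel_measurable P" "AE x in P. 0 < D x"
  shows "AE x in P. Pr x"
proof -
  have "AE x in P. 0 < ennreal (D x) \<longrightarrow> Pr x" using assms(1) by (subst (asm) AE_density) (use assms(2) in auto)
  with assms(3) show ?thesis by eventually_elim auto
qed

lemma AE_to_dens:
  assumes "AE x in P. Pr x" "D \<in> borel_measurable P"
  shows "AE x in density P (\<lambda>x. ennreal (D x)). Pr x"
  using assms by (subst AE_density) (auto elim: AE_mp)

lemma ae_transfer:
  assumes le: "locally_equivalent P F Q" and s: "0 \<le> s"
    and N: "{x\<in>space P. \<not> Pr x} \<in> sets (F s)" and sub: "subalgebra P (F s)"
    and ae: "AE x in P. Pr x"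
  shows "AE x in Q. Pr x"
proof -
  have sQ: "sets Q = sets P" using le by (simp add: locally_equivalent_def)
  have sp: "space Q = space P" by (rule sets_eq_imp_space_eq[OF sQ])
  have NP: "{x\<in>space P. \<not> Pr x} \<in> sets P" using N sub by (auto simp: subalgebra_def)
  have "emeasure P {x\<in>space P. \<not> Pr x} = 0" using ae by (subst (asm) AE_iff_measurable[OF NP refl])
  then have "emeasure Q {x\<in>space P. \<not> Pr x} = 0" using le N s by (simp add: locally_equivalent_def)
  then show ?thesis by (subst AE_iff_measurable[of "{x\<in>space P. \<not> Pr x}"]) (use NP sQ sp in auto)
qed

lemma tail:
  fixes H :: "'a \<Rightarrow> real"
  assumes "prob_space Q" and [measurable]: "H \<in> borel_measurable Q"
  shows "((\<lambda>x. measure Q {\<omega>\<in>space Q. x < H \<omega>}) \<longlongrightarrow> 0) at_top"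
proof -
  interpret prob_space Q by fact
  interpret D: real_distribution "distr Q borel H" by (rule real_distribution_distr) simp
  have eq: "measure Q {\<omega>\<in>space Q. x < H \<omega>} = 1 - cdf (distr Q borel H) x" for x
  proof -
    have "cdf (distr Q borel H) x = measure Q (H -` {..x} \<inter> space Q)"
      unfolding cdf_def by (rule measure_distr) auto
    also have "H -` {..x} \<inter> space Q = {\<omega>\<in>space Q. H \<omega> \<le> x}" by auto
    finally have c: "cdf (distr Q borel H) x = prob {\<omega>\<in>space Q. H \<omega> \<le> x}" .
    have "{\<omega>\<in>space Q. x < H \<omega>} = space Q - {\<omega>\<in>space Q. H \<omega> \<le> x}" by auto
    then have "prob {\<omega>\<in>space Q. x < H \<omega>} = 1 - prob {\<omega>\<in>space Q. H \<omega> \<le> x}"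
      by (simp add: prob_compl)
    then show ?thesis using c by simp
  qed
  have "((\<lambda>x. 1 - cdf (distr Q borel H) x) \<longlongrightarrow> 1 - 1) at_top"
    by (intro tendsto_intros D.cdf_lim_at_top_prob)
  then show ?thesis by (simp add: eq)
qed



theorem theorem3p5:
  fixes P :: "'a measure" and F :: "real \<Rightarrow> 'a measure"
    and S G M MG piS piG :: "real \<Rightarrow> 'a \<Rightarrow> real"
    and lam lamG t c C T' :: real and Q :: "'a measure"
  assumes usual: "usual_filtered_space P F"
    and S_kernel: "pricing_kernel P F S"
    and G_semimart: "semimartingale P F G"
    and G_pos: "AE \<omega> in P. \<forall>u\<ge>0. 0 < G u \<omega>"
    and G_0: "AE \<omega> in P. G 0 \<omega> = 1"
    and SG_kernel: "pricing_kernel P F (\<lambda>u \<omega>. S u \<omega> * G u \<omega>)"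
    and S_lim: "kernel_limits P F S M lam"
    and SG_lim: "kernel_limits P F (\<lambda>u \<omega>. S u \<omega> * G u \<omega>) MG lamG"
    and S_pi: "is_pi P F S piS"
    and SG_pi: "is_pi P F (\<lambda>u \<omega>. S u \<omega> * G u \<omega>) piG"
    and t_nonneg: "0 \<le> t"
    and c_pos: "0 < c" and c_C: "c < C" and T'_pos: "0 < T'"
    and bound: "\<forall>T>T'. AE \<omega> in P.
        c < cexp_dens P F MG T t (\<lambda>x. piS T x / piG T x) \<omega> / cexp_dens P F MG T t (\<lambda>x. 1 / piG T x) \<omega>
      \<and> cexp_dens P F MG T t (\<lambda>x. piS T x / piG T x) \<omega> / cexp_dens P F MG T t (\<lambda>x. 1 / piG T x) \<omega> < C"
    and Q_equiv: "locally_equivalent P F Q"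
  shows "\<forall>e>0. ((\<lambda>T. measure Q {\<omega>\<in>space Q.
            e < \<bar>exp_yield P F M (\<lambda>u \<omega>. exp (lam * u) * piS u \<omega>) G t T \<omega> - lam\<bar>}) \<longlongrightarrow> 0) at_top"
proof (intro allI impI)
  fix e :: real assume e: "0 < e"
  interpret prob_space P using usual_facts(1)[OF usual] .
  have subt: "subalgebra P (F t)" using usual_facts(2)[OF usual t_nonneg] .
  interpret Pt: finite_measure_subalgebra P "F t"
    using subt by (simp add: finite_measure_subalgebra_def finite_measure_subalgebra_axioms_def finite_measure_axioms)
  have sP: "sigma_finite_subalgebra P (F t)" by (rule Pt.sigma_finite_subalgebra_axioms)
  define B where "B = (\<lambda>u \<omega>. exp (lam * u) * piS u \<omega>)"
  define Y where "Y = (\<lambda>T \<omega>. exp_yield P F M B G t T \<omega>)"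
  define Kc where "Kc = max \<bar>ln c\<bar> \<bar>ln C\<bar>"
  define H where "H = (\<lambda>\<omega>. Kc + \<bar>ln (piS t \<omega>)\<bar>)"
  have piStF: "piS t \<in> borel_measurable (F t)" and piStpos: "AE \<omega> in P. 0 < piS t \<omega>"
    using S_pi t_nonneg unfolding is_pi_def by (elim conjE; simp)+
  have HF[measurable]: "H \<in> borel_measurable (F t)" unfolding H_def using piStF by measurable
  have YF[measurable]: "Y T \<in> borel_measurable (F t)" for T
    unfolding Y_def exp_yield_def cexp_dens_def by measurable
  have Gmeas: "G u \<in> borel_measurable (F u)" if "0 \<le> u" for u
    using G_semimart that unfolding semimartingale_def adapted_def by (elim conjE) simp
  have perT: "AE \<omega> in P. \<bar>Y T \<omega> - lam\<bar> \<le> H \<omega> / (T - t)" if T: "T > max T' t" for T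
  proof -
    have T0: "0 < T" "T' < T" "t < T" using T T'_pos by auto
    have subT: "subalgebra P (F T)" using usual_facts(2)[OF usual] T0 by simp
    note mT = measurable_from_subalg[OF subT]
    have MTF: "M T \<in> borel_measurable (F T)" and MTi: "integrable P (M T)" and MTpos: "AE \<omega> in P. 0 < M T \<omega>"
      using S_lim T0 unfolding kernel_limits_def by (elim conjE; simp)+
    have MGTF: "MG T \<in> borel_measurable (F T)" and MGTi: "integrable P (MG T)" and MGTpos: "AE \<omega> in P. 0 < MG T \<omega>"
      using SG_lim T0 unfolding kernel_limits_def by (elim conjE; simp)+
    have piSTF: "piS T \<in> borel_measurable (F T)" and piSTpos: "AE \<omega> in P. 0 < piS T \<omega>"
      using S_pi T0 unfolding is_pi_def by (elim conjE; simp)+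
    have piGTF: "piG T \<in> borel_measurable (F T)" and piGTpos: "AE \<omega> in P. 0 < piG T \<omega>"
      using SG_pi T0 unfolding is_pi_def by (elim conjE; simp)+
    have MTm[measurable]: "M T \<in> borel_measurable P" by (rule mT[OF MTF])
    have MGTm[measurable]: "MG T \<in> borel_measurable P" by (rule mT[OF MGTF])
    have piSTm[measurable]: "piS T \<in> borel_measurable P" by (rule mT[OF piSTF])
    have piGTm[measurable]: "piG T \<in> borel_measurable P" by (rule mT[OF piGTF])
    have STm[measurable]: "S T \<in> borel_measurable P" using kernel_meas[OF usual S_kernel] T0 by simp
    have GTm[measurable]: "G T \<in> borel_measurable P" by (rule mT[OF Gmeas]) (use T0 in simp)
    have piStm[measurable]: "piS t \<in> borel_measurable P" by (rule measurable_from_subalg[OF subt piStF])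
    have STpos: "AE \<omega> in P. 0 < S T \<omega>" using kernel_pos[OF S_kernel] T0 by simp
    have GTpos: "AE \<omega> in P. 0 < G T \<omega>" using G_pos by eventually_elim (use T0 in simp)
    have dS: "AE \<omega> in P. piS T \<omega> = exp (- lam * T) * M T \<omega> / S T \<omega>"
      by (rule decomp[OF usual S_kernel S_lim S_pi T0(1)])
    have dG: "AE \<omega> in P. piG T \<omega> = exp (- lamG * T) * MG T \<omega> / (S T \<omega> * G T \<omega>)"
      using decomp[OF usual SG_kernel SG_lim SG_pi T0(1)] by simp
    let ?NL = "density P (\<lambda>x. ennreal (M T x))"
    let ?NG = "density P (\<lambda>x. ennreal (MG T x))"
    have sNL: "sigma_finite_subalgebra ?NL (F t)"
      by (rule finite_measure_subalgebra_is_sigma_finite[OF dens_fin_sub[OF prob_space_axioms subt MTi]])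
    have sNG: "sigma_finite_subalgebra ?NG (F t)"
      by (rule finite_measure_subalgebra_is_sigma_finite[OF dens_fin_sub[OF prob_space_axioms subt MGTi]])
    define gL2 where "gL2 = (\<lambda>x. G T x * B t x / B T x)"
    define gG1 where "gG1 = (\<lambda>x. piS T x / piG T x)"
    define gG2 where "gG2 = (\<lambda>x. 1 / piG T x)"
    have gm[measurable]: "gL2 \<in> borel_measurable P" "gG1 \<in> borel_measurable P" "gG2 \<in> borel_measurable P"
      unfolding gL2_def gG1_def gG2_def B_def by measurable
    have Btm[measurable]: "B t \<in> borel_measurable P" unfolding B_def by measurable
    have pos_all: "AE \<omega> in P. 0 < M T \<omega> \<and> 0 < MG T \<omega> \<and> 0 < piS T \<omega> \<and> 0 < piG T \<omega> \<and> 0 < S T \<omega>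
        \<and> 0 < G T \<omega> \<and> 0 < piS t \<omega>"
      using MTpos MGTpos piSTpos piGTpos STpos GTpos piStpos by eventually_elim auto
    have nn: "AE \<omega> in P. 0 \<le> G T \<omega> \<and> 0 \<le> gL2 \<omega> \<and> 0 \<le> gG1 \<omega> \<and> 0 \<le> gG2 \<omega>"
      using pos_all by eventually_elim (auto simp: gL2_def gG1_def gG2_def B_def)
    have r1: "AE \<omega> in P. real_cond_exp ?NL (F t) (G T) \<omega> = enn2real (nn_cond_exp ?NL (F t) (\<lambda>x. ennreal (G T x)) \<omega>)"
      by (rule AE_from_dens[OF _ MTm MTpos], rule real_cond_exp_nn[OF sNL])
         (use nn in \<open>auto intro!: AE_to_dens elim: AE_mp\<close>)
    have r2: "AE \<omega> in P. real_cond_exp ?NL (F t) gL2 \<omega> = enn2real (nn_cond_exp ?NL (F t) (\<lambda>x. ennreal (gL2 x)) \<omega>)"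
      by (rule AE_from_dens[OF _ MTm MTpos], rule real_cond_exp_nn[OF sNL])
         (use nn in \<open>auto intro!: AE_to_dens elim: AE_mp\<close>)
    have r3: "AE \<omega> in P. real_cond_exp ?NG (F t) gG1 \<omega> = enn2real (nn_cond_exp ?NG (F t) (\<lambda>x. ennreal (gG1 x)) \<omega>)"
      by (rule AE_from_dens[OF _ MGTm MGTpos], rule real_cond_exp_nn[OF sNG])
         (use nn in \<open>auto intro!: AE_to_dens elim: AE_mp\<close>)
    have r4: "AE \<omega> in P. real_cond_exp ?NG (F t) gG2 \<omega> = enn2real (nn_cond_exp ?NG (F t) (\<lambda>x. ennreal (gG2 x)) \<omega>)"
      by (rule AE_from_dens[OF _ MGTm MGTpos], rule real_cond_exp_nn[OF sNG])
         (use nn in \<open>auto intro!: AE_to_dens elim: AE_mp\<close>)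
    let ?EP = "nn_cond_exp P (F t)"
    have b1: "AE x in P. nn_cond_exp ?NL (F t) (\<lambda>x. ennreal (G T x)) x * ?EP (\<lambda>x. ennreal (M T x)) x
        = ?EP (\<lambda>x. ennreal (M T x) * ennreal (G T x)) x"
      by (rule bayes[OF sP sNL MTm]) simp
    have b2: "AE x in P. nn_cond_exp ?NL (F t) (\<lambda>x. ennreal (gL2 x)) x * ?EP (\<lambda>x. ennreal (M T x)) x
        = ?EP (\<lambda>x. ennreal (M T x) * ennreal (gL2 x)) x"
      by (rule bayes[OF sP sNL MTm]) simp
    have b3: "AE x in P. nn_cond_exp ?NG (F t) (\<lambda>x. ennreal (gG1 x)) x * ?EP (\<lambda>x. ennreal (MG T x)) x
        = ?EP (\<lambda>x. ennreal (MG T x) * ennreal (gG1 x)) x"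
      by (rule bayes[OF sP sNG MGTm]) simp
    have b4: "AE x in P. nn_cond_exp ?NG (F t) (\<lambda>x. ennreal (gG2 x)) x * ?EP (\<lambda>x. ennreal (MG T x)) x
        = ?EP (\<lambda>x. ennreal (MG T x) * ennreal (gG2 x)) x"
      by (rule bayes[OF sP sNG MGTm]) simp
    define k1 where "k1 = exp ((lam - lamG) * T)"
    define eG where "eG = exp (- lamG * T)"
    have e1: "AE x in P. ennreal (M T x) * ennreal (G T x) = ennreal k1 * (ennreal (MG T x) * ennreal (gG1 x))"
      using pos_all dS dG
    proof eventually_elim
      case (elim x)
      have "M T x * G T x = k1 * (MG T x * gG1 x)"
        unfolding k1_def gG1_def by (rule idr(1)[OF elim(2) elim(3)]) (use elim(1) in auto)
      moreover have "0 \<le> k1" "0 \<le> gG1 x" using elim(1) by (auto simp: k1_def gG1_def)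
      ultimately show ?case using elim(1)
        by (simp add: ennreal_mult[symmetric])
    qed
    have e2: "AE x in P. ennreal (M T x) * ennreal (gL2 x) = ennreal (B t x * eG) * (ennreal (MG T x) * ennreal (gG2 x))"
      using pos_all dS dG
    proof eventually_elim
      case (elim x)
      have "M T x * gL2 x = (B t x * eG) * (MG T x * gG2 x)"
        unfolding eG_def gG2_def gL2_def B_def by (rule idr(2)[OF elim(2) elim(3)]) (use elim(1) in auto)
      moreover have "0 \<le> B t x * eG" "0 \<le> gG2 x" "0 \<le> gL2 x" using elim(1)
        by (auto simp: eG_def gG2_def gL2_def B_def)
      ultimately show ?case using elim(1)
        by (metis less_imp_le mult_nonneg_nonneg ennreal_mult)
    qed
    have c1: "AE x in P. ?EP (\<lambda>x. ennreal (M T x) * ennreal (G T x)) x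
        = ?EP (\<lambda>x. ennreal k1 * (ennreal (MG T x) * ennreal (gG1 x))) x"
      by (rule Pt.nn_cond_exp_cong[OF e1]) auto
    have c2: "AE x in P. ennreal k1 * ?EP (\<lambda>x. ennreal (MG T x) * ennreal (gG1 x)) x
        = ?EP (\<lambda>x. ennreal k1 * (ennreal (MG T x) * ennreal (gG1 x))) x"
      by (rule Pt.nn_cond_exp_prod) auto
    have c3: "AE x in P. ?EP (\<lambda>x. ennreal (M T x) * ennreal (gL2 x)) x
        = ?EP (\<lambda>x. ennreal (B t x * eG) * (ennreal (MG T x) * ennreal (gG2 x))) x"
      by (rule Pt.nn_cond_exp_cong[OF e2]) auto
    have BtF: "(\<lambda>x. ennreal (B t x * eG)) \<in> borel_measurable (F t)"
      unfolding B_def using piStF by measurable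
    have c4: "AE x in P. ennreal (B t x * eG) * ?EP (\<lambda>x. ennreal (MG T x) * ennreal (gG2 x)) x
        = ?EP (\<lambda>x. ennreal (B t x * eG) * (ennreal (MG T x) * ennreal (gG2 x))) x"
      by (rule Pt.nn_cond_exp_prod[OF BtF]) auto
    have f1: "AE x in P. 0 < ?EP (\<lambda>x. ennreal (M T x)) x \<and> ?EP (\<lambda>x. ennreal (M T x)) x < \<infinity>"
      by (rule nn_cond_exp_pos_fin[OF sP MTi MTpos])
    have f2: "AE x in P. 0 < ?EP (\<lambda>x. ennreal (MG T x)) x \<and> ?EP (\<lambda>x. ennreal (MG T x)) x < \<infinity>"
      by (rule nn_cond_exp_pos_fin[OF sP MGTi MGTpos])
    have bnd: "AE \<omega> in P. c < real_cond_exp ?NG (F t) gG1 \<omega> / real_cond_exp ?NG (F t) gG2 \<omega>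
        \<and> real_cond_exp ?NG (F t) gG1 \<omega> / real_cond_exp ?NG (F t) gG2 \<omega> < C"
      using bound T0 unfolding cexp_dens_def gG1_def gG2_def by simp
    show ?thesis
      using pos_all r1 r2 r3 r4 b1 b2 b3 b4 c1 c2 c3 c4 f1 f2 bnd
    proof eventually_elim
      case (elim \<omega>)
      let ?a = "nn_cond_exp ?NL (F t) (\<lambda>x. ennreal (G T x)) \<omega>"
      let ?b = "nn_cond_exp ?NL (F t) (\<lambda>x. ennreal (gL2 x)) \<omega>"
      let ?p = "nn_cond_exp ?NG (F t) (\<lambda>x. ennreal (gG1 x)) \<omega>"
      let ?q = "nn_cond_exp ?NG (F t) (\<lambda>x. ennreal (gG2 x)) \<omega>"
      let ?d = "?EP (\<lambda>x. ennreal (M T x)) \<omega>"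
      let ?dG = "?EP (\<lambda>x. ennreal (MG T x)) \<omega>"
      have ad: "?a * ?d = ennreal k1 * (?p * ?dG)"
      proof -
        have "?a * ?d = ?EP (\<lambda>x. ennreal (M T x) * ennreal (G T x)) \<omega>" by (rule elim(6))
        also have "\<dots> = ?EP (\<lambda>x. ennreal k1 * (ennreal (MG T x) * ennreal (gG1 x))) \<omega>" by (rule elim(10))
        also have "\<dots> = ennreal k1 * ?EP (\<lambda>x. ennreal (MG T x) * ennreal (gG1 x)) \<omega>" by (rule elim(11)[symmetric])
        also have "\<dots> = ennreal k1 * (?p * ?dG)" by (simp only: elim(8))
        finally show ?thesis .
      qed
      have bd: "?b * ?d = ennreal (B t \<omega> * eG) * (?q * ?dG)"
      proof -
        have "?b * ?d = ?EP (\<lambda>x. ennreal (M T x) * ennreal (gL2 x)) \<omega>" by (rule elim(7))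
        also have "\<dots> = ?EP (\<lambda>x. ennreal (B t x * eG) * (ennreal (MG T x) * ennreal (gG2 x))) \<omega>" by (rule elim(12))
        also have "\<dots> = ennreal (B t \<omega> * eG) * ?EP (\<lambda>x. ennreal (MG T x) * ennreal (gG2 x)) \<omega>" by (rule elim(13)[symmetric])
        also have "\<dots> = ennreal (B t \<omega> * eG) * (?q * ?dG)" by (simp only: elim(9))
        finally show ?thesis .
      qed
      have k1p: "0 \<le> k1" "0 < eG" "0 < B t \<omega>" using elim(1) by (auto simp: k1_def eG_def B_def)
      have AD: "enn2real ?a * enn2real ?d = k1 * (enn2real ?p * enn2real ?dG)"
        using arg_cong[OF ad, of enn2real] k1p by (simp add: enn2real_mult)
      have BD: "enn2real ?b * enn2real ?d = (B t \<omega> * eG) * (enn2real ?q * enn2real ?dG)"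
        using arg_cong[OF bd, of enn2real] k1p by (simp add: enn2real_mult)
      have Dp: "0 < enn2real ?d" "0 < enn2real ?dG"
        using elim(14) elim(15) by (auto simp: enn2real_positive_iff top_ennreal.rep_eq infinity_ennreal_def)
      have yeq: "Y T \<omega> = 1 / (T - t) * ln (enn2real ?a / enn2real ?b)"
        using elim(2) elim(3) by (simp add: Y_def exp_yield_def cexp_dens_def gL2_def)
      have R: "c < enn2real ?p / enn2real ?q" "enn2real ?p / enn2real ?q < C"
        using elim(16) elim(4) elim(5) by simp_all
      have k1e: "k1 = exp (lam * T) * eG" by (simp add: k1_def eG_def exp_add[symmetric] algebra_simps)
      have "\<bar>1 / (T - t) * ln (enn2real ?a / enn2real ?b) - lam\<bar> \<le> (max \<bar>ln c\<bar> \<bar>ln C\<bar> + \<bar>ln (piS t \<omega>)\<bar>) / (T - t)"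
        by (rule alg[OF AD BD Dp k1p(2) k1e _ _ R c_pos T0(3)]) (use elim(1) in \<open>auto simp: B_def\<close>)
      then show ?case by (simp add: yeq H_def Kc_def)
    qed
  qed
  have Qp: "prob_space Q" and sQ: "sets Q = sets P" using Q_equiv by (simp_all add: locally_equivalent_def)
  have spQ: "space Q = space P" by (rule sets_eq_imp_space_eq[OF sQ])
  interpret Q: prob_space Q by (rule Qp)
  have HP: "H \<in> borel_measurable P" by (rule measurable_from_subalg[OF subt HF])
  have HQ: "H \<in> borel_measurable Q" using HP by (simp add: measurable_def sQ spQ)
  have tl: "((\<lambda>x. measure Q {\<omega>\<in>space Q. x < H \<omega>}) \<longlongrightarrow> 0) at_top" by (rule tail[OF Qp HQ])
  have lT: "filterlim (\<lambda>T. e * (T - t)) at_top at_top"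
  proof -
    have "filterlim (\<lambda>T. - t + T) at_top at_top"
      by (rule filterlim_tendsto_add_at_top[OF tendsto_const filterlim_ident])
    then have "filterlim (\<lambda>T. T - t) at_top at_top" by simp
    then show ?thesis by (rule filterlim_tendsto_pos_mult_at_top[OF tendsto_const e])
  qed
  have glim: "((\<lambda>T. measure Q {\<omega>\<in>space Q. e * (T - t) < H \<omega>}) \<longlongrightarrow> 0) at_top"
    using filterlim_compose[OF tl lT] by simp
  have evle: "eventually (\<lambda>T. measure Q {\<omega>\<in>space Q. e < \<bar>Y T \<omega> - lam\<bar>} \<le> measure Q {\<omega>\<in>space Q. e * (T - t) < H \<omega>}) at_top"
    using eventually_gt_at_top[of "max T' t"]
  proof eventually_elim
    case (elim T)
    have Tt: "t < T" using elim by simp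
    have "{x\<in>space (F t). \<not> \<bar>Y T x - lam\<bar> \<le> H x / (T - t)} \<in> sets (F t)" by measurable
    moreover have "space (F t) = space P" using subt by (simp add: subalgebra_def)
    ultimately have Nm: "{x\<in>space P. \<not> \<bar>Y T x - lam\<bar> \<le> H x / (T - t)} \<in> sets (F t)" by simp
    have aeQ: "AE x in Q. \<bar>Y T x - lam\<bar> \<le> H x / (T - t)"
      by (rule ae_transfer[OF Q_equiv t_nonneg Nm subt perT[OF elim]])
    have Bs: "{\<omega>\<in>space Q. e * (T - t) < H \<omega>} \<in> sets Q" using HQ by measurable
    show ?case
    proof (rule Q.finite_measure_mono_AE[OF _ Bs])
      show "AE x in Q. x \<in> {\<omega>\<in>space Q. e < \<bar>Y T \<omega> - lam\<bar>} \<longrightarrow> x \<in> {\<omega>\<in>space Q. e * (T - t) < H \<omega>}"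
        using aeQ
      proof eventually_elim
        case (elim x)
        show ?case
        proof
          assume "x \<in> {\<omega>\<in>space Q. e < \<bar>Y T \<omega> - lam\<bar>}"
          then have "x \<in> space Q" "e < H x / (T - t)" using elim by auto
          then show "x \<in> {\<omega>\<in>space Q. e * (T - t) < H \<omega>}" using Tt by (simp add: pos_less_divide_eq)
        qed
      qed
    qed
  qed
  have "((\<lambda>T. measure Q {\<omega>\<in>space Q. e < \<bar>Y T \<omega> - lam\<bar>}) \<longlongrightarrow> 0) at_top"
    by (rule tendsto_sandwich[OF always_eventually evle tendsto_const glim]) simp
  then show "((\<lambda>T. measure Q {\<omega>\<in>space Q. e < \<bar>exp_yield P F M (\<lambda>u \<omega>. exp (lam * u) * piS u \<omega>) G t T \<omega> - lam\<bar>}) \<longlongrightarrow> 0) at_top"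
    by (simp add: Y_def B_def)
qed

end
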